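(* Let $A$ be a graded Frobenius algebra of Gorenstein parameter $-\ell$. Then for every $i\in\mathbb{N}$, $D(A_{\ge i}(i))\cong A(\ell-i)/A(\ell-i)_{\ge1}$ as graded right $A$-modules.
   Context: Graded algebras are $\mathbb{N}$-graded algebras over an algebraically closed field $k$. $M(n)_m=M_{n+m}$, $M_{\ge n}=\bigoplus_{m\ge n}M_m$, $D(M)=\bigoplus_m\mathrm{Hom}_k(M_{-m},k)$ (the dual of a graded left module is a graded right module). $A_{\ge i}$ is regarded as a graded left $A$-module. $A$ is graded Frobenius of Gorenstein parameter $-\ell$ if it is locally finite and $D(A)\cong A(\ell)$ as graded right $A$-modules. *)

theory Defs
  imports Main "HOL-Computational_Algebra.Polynomial"
begin

definition alg_closed :: "'k::field itself \<Rightarrow> bool" where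
  "alg_closed _ \<longleftrightarrow> (\<forall>p::'k poly. degree p \<ge> 1 \<longrightarrow> (\<exists>x. poly p x = 0))"

text \<open>The algebra A is the type 'a (an associative unital ring), with a
  k-scalar multiplication smul making it a k-algebra; Ag n is the degree-n
  component A_n.\<close>

definition graded_algebra ::
  "('k::field \<Rightarrow> 'a::ring_1 \<Rightarrow> 'a) \<Rightarrow> (nat \<Rightarrow> 'a set) \<Rightarrow> bool" where
  "graded_algebra smul Ag \<longleftrightarrow>
     Vector_Spaces.vector_space smul \<and>
     (\<forall>c x y. smul c (x * y) = smul c x * y) \<and>
     (\<forall>c x y. smul c (x * y) = x * smul c y) \<and>
     (\<forall>n. module.subspace smul (Ag n)) \<and>
     (\<forall>x. \<exists>!f. (\<forall>n. f n \<in> Ag n) \<and> finite {n. f n \<noteq> 0} \<and>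
              x = (\<Sum>n\<in>{n. f n \<noteq> 0}. f n)) \<and>
     (\<forall>m n x y. x \<in> Ag m \<longrightarrow> y \<in> Ag n \<longrightarrow> x * y \<in> Ag (m + n)) \<and>
     1 \<in> Ag 0"

definition locally_finite ::
  "('k::field \<Rightarrow> 'a::ring_1 \<Rightarrow> 'a) \<Rightarrow> (nat \<Rightarrow> 'a set) \<Rightarrow> bool" where
  "locally_finite smul Ag \<longleftrightarrow>
     (\<forall>n. \<exists>B. finite B \<and> B \<subseteq> Ag n \<and> Ag n \<subseteq> module.span smul B)"

definition Agi :: "(nat \<Rightarrow> 'a::zero set) \<Rightarrow> int \<Rightarrow> 'a set" where
  "Agi Ag d = (if d < 0 then {0} else Ag (nat d))"

text \<open>A graded A-module M = (direct sum over d of M_d) is represented by its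
  components gcomp M d (subsets of an ambient type 'm), the k-vector space
  operations on each component, and the action of homogeneous elements:
  gact M d n x a is the action of a \<in> A_n on x \<in> M_d (landing in M_(d+n));
  for a left module it is a.x, for a right module it is x.a.\<close>

record ('k, 'a, 'm) gmod =
  gcomp :: "int \<Rightarrow> 'm set"
  gadd  :: "int \<Rightarrow> 'm \<Rightarrow> 'm \<Rightarrow> 'm"
  gzero :: "int \<Rightarrow> 'm"
  gsmul :: "int \<Rightarrow> 'k \<Rightarrow> 'm \<Rightarrow> 'm"
  gact  :: "int \<Rightarrow> nat \<Rightarrow> 'm \<Rightarrow> 'a \<Rightarrow> 'm"

definition regular_left ::
  "('k::field \<Rightarrow> 'a::ring_1 \<Rightarrow> 'a) \<Rightarrow> (nat \<Rightarrow> 'a set) \<Rightarrow> ('k, 'a, 'a) gmod" where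
  "regular_left smul Ag =
     \<lparr> gcomp = Agi Ag, gadd = (\<lambda>d x y. x + y), gzero = (\<lambda>d. 0),
       gsmul = (\<lambda>d. smul), gact = (\<lambda>d n x a. a * x) \<rparr>"

definition regular_right ::
  "('k::field \<Rightarrow> 'a::ring_1 \<Rightarrow> 'a) \<Rightarrow> (nat \<Rightarrow> 'a set) \<Rightarrow> ('k, 'a, 'a) gmod" where
  "regular_right smul Ag =
     \<lparr> gcomp = Agi Ag, gadd = (\<lambda>d x y. x + y), gzero = (\<lambda>d. 0),
       gsmul = (\<lambda>d. smul), gact = (\<lambda>d n x a. x * a) \<rparr>"

definition gshift :: "('k, 'a, 'm) gmod \<Rightarrow> int \<Rightarrow> ('k, 'a, 'm) gmod" where
  "gshift M s =
     \<lparr> gcomp = (\<lambda>d. gcomp M (d + s)), gadd = (\<lambda>d. gadd M (d + s)),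
       gzero = (\<lambda>d. gzero M (d + s)), gsmul = (\<lambda>d. gsmul M (d + s)),
       gact = (\<lambda>d. gact M (d + s)) \<rparr>"

definition gtrunc_comp :: "('k, 'a, 'm) gmod \<Rightarrow> int \<Rightarrow> int \<Rightarrow> 'm set" where
  "gtrunc_comp M n d = (if n \<le> d then gcomp M d else {gzero M d})"

definition gtrunc :: "('k, 'a, 'm) gmod \<Rightarrow> int \<Rightarrow> ('k, 'a, 'm) gmod" where
  "gtrunc M n = M \<lparr> gcomp := gtrunc_comp M n \<rparr>"

definition gcoset :: "('k, 'a, 'm) gmod \<Rightarrow> (int \<Rightarrow> 'm set) \<Rightarrow> int \<Rightarrow> 'm \<Rightarrow> 'm set" where
  "gcoset M S d x = {gadd M d x s | s. s \<in> S d}"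

definition rep :: "'m set \<Rightarrow> 'm" where
  "rep X = (SOME x. x \<in> X)"

definition gquot :: "('k, 'a, 'm) gmod \<Rightarrow> (int \<Rightarrow> 'm set) \<Rightarrow> ('k, 'a, 'm set) gmod" where
  "gquot M S =
     \<lparr> gcomp = (\<lambda>d. gcoset M S d ` gcomp M d),
       gadd = (\<lambda>d X Y. gcoset M S d (gadd M d (rep X) (rep Y))),
       gzero = (\<lambda>d. gcoset M S d (gzero M d)),
       gsmul = (\<lambda>d c X. gcoset M S d (gsmul M d c (rep X))),
       gact = (\<lambda>d n X a. gcoset M S (d + int n) (gact M d n (rep X) a)) \<rparr>"

text \<open>Graded dual of a graded left module: D(M)_d = Hom_k(M_{-d}, k)
  (k-linear functionals on M_{-d}, extended by 0 outside M_{-d}),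
  with the right action (phi.a)(x) = phi(a.x).\<close>
definition lin_functional :: "('k::field, 'a, 'm) gmod \<Rightarrow> int \<Rightarrow> ('m \<Rightarrow> 'k) \<Rightarrow> bool" where
  "lin_functional M e phi \<longleftrightarrow>
     (\<forall>x\<in>gcomp M e. \<forall>y\<in>gcomp M e. phi (gadd M e x y) = phi x + phi y) \<and>
     (\<forall>c. \<forall>x\<in>gcomp M e. phi (gsmul M e c x) = c * phi x) \<and>
     (\<forall>x. x \<notin> gcomp M e \<longrightarrow> phi x = 0)"

definition gdual :: "('k::field, 'a, 'm) gmod \<Rightarrow> ('k, 'a, 'm \<Rightarrow> 'k) gmod" where
  "gdual M =
     \<lparr> gcomp = (\<lambda>d. {phi. lin_functional M (- d) phi}),
       gadd = (\<lambda>d phi psi x. phi x + psi x),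
       gzero = (\<lambda>d x. 0),
       gsmul = (\<lambda>d c phi x. c * phi x),
       gact = (\<lambda>d n phi a x. if x \<in> gcomp M (- d - int n)
                               then phi (gact M (- d - int n) n x a) else 0) \<rparr>"

definition gmod_iso ::
  "(nat \<Rightarrow> 'a set) \<Rightarrow> ('k, 'a, 'm) gmod \<Rightarrow> ('k, 'a, 'n) gmod \<Rightarrow> bool" where
  "gmod_iso Ag M N \<longleftrightarrow> (\<exists>f :: int \<Rightarrow> 'm \<Rightarrow> 'n.
     \<forall>d. bij_betw (f d) (gcomp M d) (gcomp N d) \<and>
         (\<forall>x\<in>gcomp M d. \<forall>y\<in>gcomp M d. f d (gadd M d x y) = gadd N d (f d x) (f d y)) \<and>
         (\<forall>c. \<forall>x\<in>gcomp M d. f d (gsmul M d c x) = gsmul N d c (f d x)) \<and>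
         (\<forall>n a. \<forall>x\<in>gcomp M d. a \<in> Ag n \<longrightarrow>
              f (d + int n) (gact M d n x a) = gact N d n (f d x) a))"

text \<open>A is graded Frobenius of Gorenstein parameter -l iff it is locally finite and
  D(A) \<cong> A(l) as graded right A-modules (A regarded as a graded left module when dualised).\<close>
definition graded_frobenius ::
  "('k::field \<Rightarrow> 'a::ring_1 \<Rightarrow> 'a) \<Rightarrow> (nat \<Rightarrow> 'a set) \<Rightarrow> int \<Rightarrow> bool" where
  "graded_frobenius smul Ag l \<longleftrightarrow>
     locally_finite smul Ag \<and>
     gmod_iso Ag (gdual (regular_left smul Ag)) (gshift (regular_right smul Ag) l)"

end

theory Submission
  imports Defs
begin

lemma agi_facts:
  fixes smul :: "'k::field \<Rightarrow> 'a::ring_1 \<Rightarrow> 'a"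
  assumes ga: "graded_algebra smul Ag"
  shows agi_zero: "0 \<in> Agi Ag m"
    and agi_add: "x \<in> Agi Ag m \<Longrightarrow> y \<in> Agi Ag m \<Longrightarrow> x + y \<in> Agi Ag m"
    and agi_diff: "x \<in> Agi Ag m \<Longrightarrow> y \<in> Agi Ag m \<Longrightarrow> x - y \<in> Agi Ag m"
    and agi_smul: "x \<in> Agi Ag m \<Longrightarrow> smul c x \<in> Agi Ag m"
    and agi_mult: "x \<in> Agi Ag m \<Longrightarrow> a \<in> Ag n \<Longrightarrow> x * a \<in> Agi Ag (m + int n)"
proof -
  have vs: "Vector_Spaces.vector_space smul" and sub: "\<And>n. module.subspace smul (Ag n)"
    and mul: "\<And>m n x y. x \<in> Ag m \<Longrightarrow> y \<in> Ag n \<Longrightarrow> x * y \<in> Ag (m + n)"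
    using ga unfolding graded_algebra_def by auto
  have md: "module smul" using vs by (simp add: vector_space_def module_def)
  have z: "\<And>n. 0 \<in> Ag n" using sub md by (simp add: module.subspace_def)
  show "0 \<in> Agi Ag m" using z by (simp add: Agi_def)
  show "x \<in> Agi Ag m \<Longrightarrow> y \<in> Agi Ag m \<Longrightarrow> x + y \<in> Agi Ag m"
    using sub md by (auto simp: Agi_def module.subspace_def split: if_splits)
  show "x \<in> Agi Ag m \<Longrightarrow> y \<in> Agi Ag m \<Longrightarrow> x - y \<in> Agi Ag m"
    using sub md by (auto simp: Agi_def module.subspace_diff split: if_splits)
  show "x \<in> Agi Ag m \<Longrightarrow> smul c x \<in> Agi Ag m"
    using sub md by (auto simp: Agi_def module.subspace_def module.scale_zero_right split: if_splits)
  show "x \<in> Agi Ag m \<Longrightarrow> a \<in> Ag n \<Longrightarrow> x * a \<in> Agi Ag (m + int n)"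
  proof -
    assume x: "x \<in> Agi Ag m" and a: "a \<in> Ag n"
    show ?thesis
    proof (cases "m < 0")
      case True
      then have "x = 0" using x by (simp add: Agi_def)
      then show ?thesis using z by (simp add: Agi_def)
    next
      case False
      then have "x \<in> Ag (nat m)" using x by (simp add: Agi_def)
      then have "x * a \<in> Ag (nat m + n)" using mul a by blast
      moreover have "nat (m + int n) = nat m + n" using False by simp
      ultimately show ?thesis using False by (simp add: Agi_def)
    qed
  qed
qed


theorem lemma3p10:
  fixes smul :: "'k::field \<Rightarrow> 'a::ring_1 \<Rightarrow> 'a"
    and Ag :: "nat \<Rightarrow> 'a set"
    and l :: int
    and i :: nat
  assumes "alg_closed TYPE('k)"
    and ga: "graded_algebra smul Ag"
    and fr: "graded_frobenius smul Ag l"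
  shows "gmod_iso Ag
           (gdual (gshift (gtrunc (regular_left smul Ag) (int i)) (int i)))
           (gquot (gshift (regular_right smul Ag) (l - int i))
                  (gtrunc_comp (gshift (regular_right smul Ag) (l - int i)) 1))"
proof -
  define RL where "RL = regular_left smul Ag"
  define RR where "RR = regular_right smul Ag"
  define Mi where "Mi = gshift (gtrunc RL (int i)) (int i)"
  define R where "R = gshift RR (l - int i)"
  define S where "S = gtrunc_comp R 1"
  define N where "N = gquot R S"
  define DM where "DM = gdual Mi"
  define DA where "DA = gdual RL"
  define T where "T = gshift RR l"
  obtain g where g: "\<And>d. bij_betw (g d) (gcomp DA d) (gcomp T d) \<and>
         (\<forall>x\<in>gcomp DA d. \<forall>y\<in>gcomp DA d. g d (gadd DA d x y) = gadd T d (g d x) (g d y)) \<and>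
         (\<forall>c. \<forall>x\<in>gcomp DA d. g d (gsmul DA d c x) = gsmul T d c (g d x)) \<and>
         (\<forall>n a. \<forall>x\<in>gcomp DA d. a \<in> Ag n \<longrightarrow>
              g (d + int n) (gact DA d n x a) = gact T d n (g d x) a)"
    using fr unfolding graded_frobenius_def gmod_iso_def DA_def T_def RL_def RR_def by blast
  have compMi: "\<And>e. gcomp Mi e = (if 0 \<le> e then Agi Ag (e + int i) else {0})"
    by (simp add: Mi_def gshift_def gtrunc_def gtrunc_comp_def RL_def regular_left_def)
  have opsMi: "\<And>e. gadd Mi e = (\<lambda>x y. x + y)" "\<And>e. gsmul Mi e = smul"
     "\<And>e n x a. gact Mi e n x a = a * x"
    by (simp_all add: Mi_def gshift_def gtrunc_def RL_def regular_left_def)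
  have compR: "\<And>d. gcomp R d = Agi Ag (d + (l - int i))"
    by (simp add: R_def gshift_def RR_def regular_right_def)
  have compT: "\<And>d. gcomp T d = Agi Ag (d + l)"
    by (simp add: T_def gshift_def RR_def regular_right_def)
  have opsT: "\<And>d. gadd T d = (\<lambda>x y. x + y)" "\<And>d. gsmul T d = smul"
     "\<And>d n x a. gact T d n x a = x * a"
    by (simp_all add: T_def gshift_def RR_def regular_right_def)
  have opsDA: "\<And>d. gadd DA d = (\<lambda>phi psi x. phi x + psi x)" "\<And>d. gsmul DA d = (\<lambda>c phi x. c * phi x)"
     "\<And>d n phi a. gact DA d n phi a = (\<lambda>x. if x \<in> Agi Ag (- d - int n) then phi (a * x) else 0)"
    by (simp_all add: DA_def gdual_def RL_def regular_left_def cong: if_cong)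
  have opsDM: "\<And>d. gadd DM d = (\<lambda>phi psi x. phi x + psi x)" "\<And>d. gsmul DM d = (\<lambda>c phi x. c * phi x)"
     "\<And>d n phi a. gact DM d n phi a = (\<lambda>x. if x \<in> gcomp Mi (- d - int n) then phi (a * x) else 0)"
    by (simp_all add: DM_def gdual_def opsMi cong: if_cong)
  have coset: "\<And>d x. gcoset R S d x = {x + s | s. s \<in> S d}"
    by (simp add: gcoset_def R_def gshift_def RR_def regular_right_def)
  have Sd: "\<And>d. S d = (if 1 \<le> d then Agi Ag (d + (l - int i)) else {0})"
    by (simp add: S_def gtrunc_comp_def compR, simp add: R_def gshift_def RR_def regular_right_def)
  have coset0: "\<And>d x. d \<le> 0 \<Longrightarrow> gcoset R S d x = {x}"
    using coset Sd by auto
  have coset1: "\<And>d x. 1 \<le> d \<Longrightarrow> x \<in> Agi Ag (d + (l - int i)) \<Longrightarrow> gcoset R S d x = Agi Ag (d + (l - int i))"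
  proof -
    fix d x assume d: "1 \<le> (d::int)" and x: "x \<in> Agi Ag (d + (l - int i))"
    have "gcoset R S d x = {x + s | s. s \<in> Agi Ag (d + (l - int i))}" using coset Sd d by simp
    also have "\<dots> = Agi Ag (d + (l - int i))"
    proof (intro equalityI subsetI)
      fix y assume "y \<in> {x + s | s. s \<in> Agi Ag (d + (l - int i))}"
      then show "y \<in> Agi Ag (d + (l - int i))" using agi_add[OF ga] x by auto
    next
      fix y assume y: "y \<in> Agi Ag (d + (l - int i))"
      have "y = x + (y - x)" by simp
      moreover have "y - x \<in> Agi Ag (d + (l - int i))" using agi_diff[OF ga] x y by blast
      ultimately show "y \<in> {x + s | s. s \<in> Agi Ag (d + (l - int i))}" by blast
    qed
    finally show "gcoset R S d x = Agi Ag (d + (l - int i))" .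
  qed
  have compN: "\<And>d. gcomp N d = gcoset R S d ` Agi Ag (d + (l - int i))"
    by (simp add: N_def gquot_def compR)
  have compN0: "\<And>d. d \<le> 0 \<Longrightarrow> gcomp N d = (\<lambda>x. {x}) ` Agi Ag (d + (l - int i))"
    using compN coset0 by simp
  have compN1: "\<And>d. 1 \<le> d \<Longrightarrow> gcomp N d = {Agi Ag (d + (l - int i))}"
  proof -
    fix d :: int assume d: "1 \<le> d"
    have "gcoset R S d ` Agi Ag (d + (l - int i)) = (\<lambda>x. Agi Ag (d + (l - int i))) ` Agi Ag (d + (l - int i))"
      using coset1[OF d] by (intro image_cong) auto
    also have "\<dots> = {Agi Ag (d + (l - int i))}" using agi_zero[OF ga] by blast
    finally show "gcomp N d = {Agi Ag (d + (l - int i))}" using compN by simp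
  qed
  have opsN: "\<And>d X Y. gadd N d X Y = gcoset R S d (rep X + rep Y)"
     "\<And>d c X. gsmul N d c X = gcoset R S d (smul c (rep X))"
     "\<And>d n X a. gact N d n X a = gcoset R S (d + int n) (rep X * a)"
    by (simp_all add: N_def gquot_def R_def gshift_def RR_def regular_right_def)
  have rep1: "\<And>x. rep {x} = x" by (simp add: rep_def)
  have compDM0: "\<And>d. d \<le> 0 \<Longrightarrow> gcomp DM d = gcomp DA (d - int i)"
  proof -
    fix d :: int assume d: "d \<le> 0"
    have "gcomp Mi (- d) = Agi Ag (- (d - int i))" using compMi d by simp
    then show "gcomp DM d = gcomp DA (d - int i)"
      by (simp add: DM_def DA_def gdual_def lin_functional_def opsMi RL_def regular_left_def)
  qed
  have compDM1: "\<And>d. 1 \<le> d \<Longrightarrow> gcomp DM d = {\<lambda>x. 0}"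
  proof -
    fix d :: int assume d: "1 \<le> d"
    have c: "gcomp Mi (- d) = {0}" using compMi d by simp
    show "gcomp DM d = {\<lambda>x. 0}"
    proof (intro equalityI subsetI)
      fix phi assume "phi \<in> gcomp DM d"
      then have "lin_functional Mi (- d) phi" by (simp add: DM_def gdual_def)
      then have "phi 0 = phi 0 + phi 0" and "\<And>x. x \<noteq> 0 \<Longrightarrow> phi x = 0"
        unfolding lin_functional_def c opsMi by auto
      then have p0: "phi 0 = 0" and px: "\<And>x. x \<noteq> 0 \<Longrightarrow> phi x = 0"
        by (metis add_cancel_right_right)+
      have "phi = (\<lambda>x. 0)"
      proof (rule ext)
        fix x show "phi x = 0" using p0 px by (cases "x = 0") auto
      qed
      then show "phi \<in> {\<lambda>x. 0}" by auto
    next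
      fix phi assume "phi \<in> {\<lambda>x::'a. 0::'k}"
      then show "phi \<in> gcomp DM d"
        by (simp add: DM_def gdual_def lin_functional_def c opsMi)
    qed
  qed
  define f where "f d phi = (if d \<le> 0 then {g (d - int i) phi} else Agi Ag (d + (l - int i)))" for d phi
  have main: "\<forall>d. bij_betw (f d) (gcomp DM d) (gcomp N d) \<and>
         (\<forall>x\<in>gcomp DM d. \<forall>y\<in>gcomp DM d. f d (gadd DM d x y) = gadd N d (f d x) (f d y)) \<and>
         (\<forall>c. \<forall>x\<in>gcomp DM d. f d (gsmul DM d c x) = gsmul N d c (f d x)) \<and>
         (\<forall>n a. \<forall>x\<in>gcomp DM d. a \<in> Ag n \<longrightarrow> f (d + int n) (gact DM d n x a) = gact N d n (f d x) a)"
  proof (rule allI, intro conjI)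
    fix d :: int
    have repA: "\<And>m. rep (Agi Ag m) \<in> Agi Ag m"
      unfolding rep_def using agi_zero[OF ga] by (rule someI)
    have gbij: "\<And>e. bij_betw (g e) (gcomp DA e) (gcomp T e)" using g by blast
    have gadd': "\<And>e x y. x \<in> gcomp DA e \<Longrightarrow> y \<in> gcomp DA e \<Longrightarrow> g e (\<lambda>z. x z + y z) = g e x + g e y"
      using g opsDA opsT by metis
    have gsmul': "\<And>e c x. x \<in> gcomp DA e \<Longrightarrow> g e (\<lambda>z. c * x z) = smul c (g e x)"
      using g opsDA opsT by metis
    have gact': "\<And>e n a x. x \<in> gcomp DA e \<Longrightarrow> a \<in> Ag n \<Longrightarrow>
        g (e + int n) (gact DA e n x a) = g e x * a"
      using g opsT by metis
    have gin: "\<And>e x. x \<in> gcomp DA e \<Longrightarrow> g e x \<in> Agi Ag (e + l)"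
      using gbij compT by (metis bij_betwE)
    show "bij_betw (f d) (gcomp DM d) (gcomp N d)"
    proof (cases "d \<le> 0")
      case True
      have e: "d - int i + l = d + (l - int i)" by simp
      have b1: "bij_betw (g (d - int i)) (gcomp DM d) (Agi Ag (d + (l - int i)))"
        using gbij[of "d - int i"] compDM0[OF True] compT e by simp
      have b2: "bij_betw (\<lambda>x. {x}) (Agi Ag (d + (l - int i))) ((\<lambda>x. {x}) ` Agi Ag (d + (l - int i)))"
        by (rule inj_on_imp_bij_betw) (simp add: inj_on_def)
      have "bij_betw ((\<lambda>x. {x}) \<circ> g (d - int i)) (gcomp DM d) (gcomp N d)"
        using bij_betw_trans[OF b1 b2] compN0[OF True] by simp
      moreover have "f d = (\<lambda>x. {x}) \<circ> g (d - int i)" using True by (auto simp: f_def)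
      ultimately show ?thesis by simp
    next
      case False
      then have d1: "1 \<le> d" by simp
      show ?thesis using False compDM1[OF d1] compN1[OF d1] by (simp add: f_def bij_betw_def)
    qed
    show "\<forall>x\<in>gcomp DM d. \<forall>y\<in>gcomp DM d. f d (gadd DM d x y) = gadd N d (f d x) (f d y)"
    proof (intro ballI)
      fix x y assume x: "x \<in> gcomp DM d" and y: "y \<in> gcomp DM d"
      show "f d (gadd DM d x y) = gadd N d (f d x) (f d y)"
      proof (cases "d \<le> 0")
        case True
        then show ?thesis using x y compDM0[OF True] gadd' coset0[OF True]
          by (simp add: f_def opsDM opsN rep1)
      next
        case False
        then have d1: "1 \<le> d" by simp
        show ?thesis using False coset1[OF d1] repA agi_add[OF ga]
          by (simp add: f_def opsN)
      qed
    qed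
    show "\<forall>c. \<forall>x\<in>gcomp DM d. f d (gsmul DM d c x) = gsmul N d c (f d x)"
    proof (intro allI ballI)
      fix c x assume x: "x \<in> gcomp DM d"
      show "f d (gsmul DM d c x) = gsmul N d c (f d x)"
      proof (cases "d \<le> 0")
        case True
        then show ?thesis using x compDM0[OF True] gsmul' coset0[OF True]
          by (simp add: f_def opsDM opsN rep1)
      next
        case False
        then have d1: "1 \<le> d" by simp
        show ?thesis using False coset1[OF d1] repA agi_smul[OF ga]
          by (simp add: f_def opsN)
      qed
    qed
    show "\<forall>n a. \<forall>x\<in>gcomp DM d. a \<in> Ag n \<longrightarrow> f (d + int n) (gact DM d n x a) = gact N d n (f d x) a"
    proof (intro allI ballI impI)
      fix n a x assume x: "x \<in> gcomp DM d" and a: "a \<in> Ag n"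
      show "f (d + int n) (gact DM d n x a) = gact N d n (f d x) a"
      proof (cases "d + int n \<le> 0")
        case True
        then have d0: "d \<le> 0" by simp
        have xA: "x \<in> gcomp DA (d - int i)" using x compDM0[OF d0] by simp
        have cm: "gcomp Mi (- d - int n) = Agi Ag (- (d - int i) - int n)"
          using compMi True by (simp add: algebra_simps)
        have ga1: "gact DM d n x a = gact DA (d - int i) n x a"
          by (simp add: opsDM opsDA cm)
        have ei: "d + int n - int i = d - int i + int n" by simp
        have "f (d + int n) (gact DM d n x a) = {g (d - int i + int n) (gact DA (d - int i) n x a)}"
          using True by (simp add: f_def ga1 ei)
        also have "\<dots> = {g (d - int i) x * a}" using gact'[OF xA a] by simp
        also have "\<dots> = gact N d n (f d x) a"
          using d0 coset0[OF True] by (simp add: f_def opsN rep1)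
        finally show ?thesis .
      next
        case False
        then have d1: "1 \<le> d + int n" by simp
        have "f (d + int n) (gact DM d n x a) = Agi Ag (d + int n + (l - int i))"
          using False by (simp add: f_def)
        moreover have "rep (f d x) * a \<in> Agi Ag (d + int n + (l - int i))"
        proof (cases "d \<le> 0")
          case True
          have xA: "x \<in> gcomp DA (d - int i)" using x compDM0[OF True] by simp
          have "g (d - int i) x * a \<in> Agi Ag (d - int i + l + int n)"
            using agi_mult[OF ga gin[OF xA] a] .
          moreover have "d - int i + l + int n = d + int n + (l - int i)" by simp
          ultimately show ?thesis using True by (simp add: f_def rep1)
        next
          case False
          have "rep (Agi Ag (d + (l - int i))) * a \<in> Agi Ag (d + (l - int i) + int n)"
            using agi_mult[OF ga repA a] .
          moreover have "d + (l - int i) + int n = d + int n + (l - int i)" by simp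
          ultimately show ?thesis using False by (simp add: f_def)
        qed
        ultimately show ?thesis using coset1[OF d1] by (simp add: opsN)
      qed
    qed
  qed
  show ?thesis using main unfolding gmod_iso_def N_def S_def R_def RR_def Mi_def RL_def DM_def by blast
qed

end
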